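(* Let $M\subset\mathbb{R}^{2d}$ satisfy the standing assumptions below, let $V$ be the vector field defined below and $\varphi_t$ its flow. There exist constants $\tilde C,\tilde\delta>0$ such that for all $x$ with $|x|\ge 1/\tilde\delta$, $$|\varphi_1(x)-x-V(x)|\le\frac{\tilde C}{|x|}.$$
   Context: $\mathbb{R}^{2d}$ carries its standard inner product, norm $|\cdot|$, complex structure $J$ ($J^2=-I$, orthogonal) and symplectic form $\omega(u,v)=\langle Ju,v\rangle$. Standing assumptions: $M$ is a smooth closed hypersurface bounding a strictly convex domain containing the origin in its interior, and is a level set of a smooth function with positive definite Hessian. Let $G:M\to S^{2d-1}$ be the outward unit normal Gauss map (a diffeomorphism). For $x\neq0$ set $n_\pm(x)=G^{-1}(\mp Jx/|x|)$ and $V(x)=2(n_+(x)-n_-(x))$, a smooth vector field on $\mathbb{R}^{2d}\setminus\{0\}$, homogeneous of degree zero ($V(cx)=V(x)$ for $c>0$). It equals $-2X_H$, where $X_H=J\nabla H$ and $H$ is the positively $1$-homogeneous function whose unit level set is the symplectic polar of the symmetrization of $M$; in particular its flow $\varphi_t$ is defined for all $t$. *)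

theory Defs
  imports "HOL-Analysis.Analysis"
begin

text \<open>We model R^{2d} as complex^'d (real inner product = real part of the Hermitian
product), with the standard complex structure J = multiplication by i.\<close>

definition cJ :: "complex^'d \<Rightarrow> complex^'d" where
  "cJ x = (\<chi> i. \<i> * x $ i)"

coinductive smooth_fun :: "('a::real_normed_vector \<Rightarrow> real) \<Rightarrow> bool" where
  "(\<forall>x. f differentiable (at x)) \<Longrightarrow>
   (\<forall>v. smooth_fun (\<lambda>x. frechet_derivative f (at x) v)) \<Longrightarrow> smooth_fun f"

definition hess_form :: "('a::real_normed_vector \<Rightarrow> real) \<Rightarrow> 'a \<Rightarrow> 'a \<Rightarrow> real" where
  "hess_form f x v = frechet_derivative (\<lambda>y. frechet_derivative f (at y) v) (at x) v"

definition grad :: "('a::euclidean_space \<Rightarrow> real) \<Rightarrow> 'a \<Rightarrow> 'a" where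
  "grad f x = (\<Sum>b\<in>Basis. frechet_derivative f (at x) b *\<^sub>R b)"

definition gauss_map :: "('a::euclidean_space \<Rightarrow> real) \<Rightarrow> 'a \<Rightarrow> 'a" where
  "gauss_map F p = grad F p /\<^sub>R norm (grad F p)"

definition gauss_inv :: "('a::euclidean_space \<Rightarrow> real) \<Rightarrow> real \<Rightarrow> 'a \<Rightarrow> 'a" where
  "gauss_inv F c u = (THE p. F p = c \<and> gauss_map F p = u)"

definition n_plus :: "(complex^'d \<Rightarrow> real) \<Rightarrow> real \<Rightarrow> complex^'d \<Rightarrow> complex^'d" where
  "n_plus F c x = gauss_inv F c (- (cJ x /\<^sub>R norm x))"

definition n_minus :: "(complex^'d \<Rightarrow> real) \<Rightarrow> real \<Rightarrow> complex^'d \<Rightarrow> complex^'d" where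
  "n_minus F c x = gauss_inv F c (cJ x /\<^sub>R norm x)"

definition Vfield :: "(complex^'d \<Rightarrow> real) \<Rightarrow> real \<Rightarrow> complex^'d \<Rightarrow> complex^'d" where
  "Vfield F c x = 2 *\<^sub>R (n_plus F c x - n_minus F c x)"

end

theory Submission
  imports Defs
begin

lemma sm_diff: "smooth_fun f \<Longrightarrow> f differentiable (at x)"
  by (erule smooth_fun.cases) auto

lemma sm_D: "smooth_fun f \<Longrightarrow> smooth_fun (\<lambda>x. frechet_derivative f (at x) v)"
  by (erule smooth_fun.cases) auto

lemma sm_hd: "smooth_fun f \<Longrightarrow> (f has_derivative frechet_derivative f (at x)) (at x)"
  using sm_diff frechet_derivative_works by blast

lemma sm_cont: "smooth_fun f \<Longrightarrow> continuous_on S f"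
  by (meson continuous_at_imp_continuous_on differentiable_imp_continuous_within sm_diff)

lemma sm_lin: "smooth_fun f \<Longrightarrow> linear (frechet_derivative f (at x))"
  using sm_hd has_derivative_linear by blast

lemma D_lin:
  fixes f :: "'a::euclidean_space \<Rightarrow> real"
  assumes "smooth_fun f"
  shows "frechet_derivative f (at x) v = (\<Sum>b\<in>Basis. (v \<bullet> b) * frechet_derivative f (at x) b)"
proof -
  interpret linear "frechet_derivative f (at x)" using sm_lin[OF assms] .
  have "frechet_derivative f (at x) v = frechet_derivative f (at x) (\<Sum>b\<in>Basis. (v \<bullet> b) *\<^sub>R b)"
    by (simp only: euclidean_representation)
  also have "\<dots> = (\<Sum>b\<in>Basis. frechet_derivative f (at x) ((v \<bullet> b) *\<^sub>R b))"
    by (rule sum)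
  also have "\<dots> = (\<Sum>b\<in>Basis. (v \<bullet> b) * frechet_derivative f (at x) b)"
    by (simp only: scale real_scaleR_def)
  finally show ?thesis .
qed

definition H2 :: "('a::euclidean_space \<Rightarrow> real) \<Rightarrow> 'a \<Rightarrow> 'a \<Rightarrow> 'a \<Rightarrow> real" where
  "H2 f b b' x = frechet_derivative (\<lambda>y. frechet_derivative f (at y) b) (at x) b'"

lemma hess_expand:
  fixes f :: "'a::euclidean_space \<Rightarrow> real"
  assumes sm: "smooth_fun f"
  shows "hess_form f x v = (\<Sum>b\<in>Basis. \<Sum>b'\<in>Basis. (v \<bullet> b) * (v \<bullet> b') * H2 f b b' x)"
proof -
  have e: "(\<lambda>y. frechet_derivative f (at y) v) = (\<lambda>y. \<Sum>b\<in>Basis. (v \<bullet> b) * frechet_derivative f (at y) b)"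
    by (rule ext, rule D_lin[OF sm])
  have hd: "((\<lambda>y. \<Sum>b\<in>Basis. (v \<bullet> b) * frechet_derivative f (at y) b) has_derivative
      (\<lambda>h. \<Sum>b\<in>Basis. (v \<bullet> b) * frechet_derivative (\<lambda>y. frechet_derivative f (at y) b) (at x) h)) (at x)"
    apply (rule has_derivative_sum)
    apply (rule has_derivative_mult_right)
    apply (rule sm_hd[OF sm_D[OF sm]])
    done
  have "hess_form f x v = (\<Sum>b\<in>Basis. (v \<bullet> b) * frechet_derivative (\<lambda>y. frechet_derivative f (at y) b) (at x) v)"
    unfolding hess_form_def e frechet_derivative_at[OF hd, symmetric] by (rule refl)
  also have "\<dots> = (\<Sum>b\<in>Basis. (v \<bullet> b) * (\<Sum>b'\<in>Basis. (v \<bullet> b') * H2 f b b' x))"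
    unfolding H2_def
    apply (rule sum.cong[OF refl])
    apply (subst D_lin[OF sm_D[OF sm]])
    apply (rule refl)
    done
  also have "\<dots> = (\<Sum>b\<in>Basis. \<Sum>b'\<in>Basis. (v \<bullet> b) * (v \<bullet> b') * H2 f b b' x)"
    by (simp add: sum_distrib_left mult.assoc)
  finally show ?thesis .
qed

lemma H2_cont: "smooth_fun f \<Longrightarrow> continuous_on S (H2 f b b')"
  unfolding H2_def by (intro sm_cont sm_D)


definition hq :: "('a::euclidean_space \<Rightarrow> real) \<Rightarrow> 'a \<Rightarrow> 'a \<Rightarrow> real" where
  "hq f x v = (\<Sum>b\<in>Basis. \<Sum>b'\<in>Basis. (v \<bullet> b) * (v \<bullet> b') * H2 f b b' x)"

lemma hq_cont:
  fixes f :: "'a::euclidean_space \<Rightarrow> real"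
  assumes sm: "smooth_fun f"
  shows "continuous_on S (\<lambda>p. hq f (fst p) (snd p))"
  unfolding hq_def
  apply (intro continuous_on_sum continuous_on_mult continuous_on_inner continuous_on_snd continuous_on_const)
  apply (rule continuous_on_id)
  apply (rule continuous_on_id)
  apply (rule continuous_on_compose2[OF H2_cont[OF sm] continuous_on_fst])
  apply auto
  done

lemma hq_scale: "hq f x (t *\<^sub>R v) = t^2 * hq f x v"
  unfolding hq_def by (simp add: sum_distrib_left power2_eq_square mult_ac)

lemma lam_exists:
  fixes F :: "'a::euclidean_space \<Rightarrow> real"
  assumes sm: "smooth_fun F"
    and hp: "\<And>x v. v \<noteq> 0 \<Longrightarrow> hess_form F x v > 0"
  shows "\<exists>l>0. \<forall>x\<in>cball 0 R. \<forall>v. hess_form F x v \<ge> l * (norm v)^2"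
proof (cases "R < 0")
  case True then show ?thesis by (intro exI[of _ 1]) auto
next
  case False
  let ?S = "cball (0::'a) R \<times> sphere (0::'a) 1"
  have "compact ?S" by (intro compact_Times compact_cball compact_sphere)
  moreover have "?S \<noteq> {}" using False by auto
  ultimately obtain z where z: "z \<in> ?S" and zm: "\<forall>y\<in>?S. hq F (fst z) (snd z) \<le> hq F (fst y) (snd y)"
    using continuous_attains_inf[OF _ _ hq_cont[OF sm]] by blast
  define l where "l = hq F (fst z) (snd z)"
  have "snd z \<noteq> 0" using z by auto
  then have lpos: "l > 0" using hp[of "snd z" "fst z"] unfolding l_def hess_expand[OF sm] hq_def by simp
  have "hess_form F x v \<ge> l * (norm v)^2" if x: "x \<in> cball 0 R" for x v
  proof (cases "v = 0")
    case True then show ?thesis by (simp add: hess_expand[OF sm])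
  next
    case False
    have "(x, v /\<^sub>R norm v) \<in> ?S" using x False by auto
    then have "l \<le> hq F x (v /\<^sub>R norm v)" using zm unfolding l_def by force
    then have "l * (norm v)^2 \<le> (norm v)^2 * hq F x (v /\<^sub>R norm v)"
      by (metis mult.commute mult_right_mono zero_le_power2)
    also have "\<dots> = hq F x (norm v *\<^sub>R (v /\<^sub>R norm v))" by (simp only: hq_scale)
    also have "\<dots> = hess_form F x v" using False by (simp add: hess_expand[OF sm] hq_def)
    finally show ?thesis .
  qed
  with lpos show ?thesis by blast
qed

lemma line_d1:
  fixes F :: "'a::euclidean_space \<Rightarrow> real"
  assumes sm: "smooth_fun F"
  shows "((\<lambda>t. F (p + t *\<^sub>R w)) has_real_derivative frechet_derivative F (at (p + t *\<^sub>R w)) w) (at t)"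
proof -
  have l: "linear (frechet_derivative F (at (p + t *\<^sub>R w)))" by (rule sm_lin[OF sm])
  have "((\<lambda>t. p + t *\<^sub>R w) has_derivative (\<lambda>h. h *\<^sub>R w)) (at t)"
    by (auto intro!: derivative_eq_intros)
  from has_derivative_compose[OF this sm_hd[OF sm]]
  have "((\<lambda>t. F (p + t *\<^sub>R w)) has_derivative (\<lambda>h. frechet_derivative F (at (p + t *\<^sub>R w)) (h *\<^sub>R w))) (at t)"
    by (simp add: o_def)
  then show ?thesis unfolding has_field_derivative_def
    by (rule has_derivative_eq_rhs) (auto simp: linear_scale[OF l] mult.commute)
qed

lemma line_d2:
  fixes F :: "'a::euclidean_space \<Rightarrow> real"
  assumes sm: "smooth_fun F"
  shows "((\<lambda>t. frechet_derivative F (at (p + t *\<^sub>R w)) w) has_real_derivative hess_form F (p + t *\<^sub>R w) w) (at t)"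
  unfolding hess_form_def by (rule line_d1[OF sm_D[OF sm]])

lemma D_zero: "smooth_fun F \<Longrightarrow> frechet_derivative F (at x) 0 = 0"
  using sm_lin linear_0 by blast

lemma mono_deriv:
  fixes F :: "'a::euclidean_space \<Rightarrow> real"
  assumes sm: "smooth_fun F"
    and hp: "\<And>x v. v \<noteq> 0 \<Longrightarrow> hess_form F x v > 0"
    and st: "s \<le> t"
  shows "frechet_derivative F (at (p + s *\<^sub>R w)) w \<le> frechet_derivative F (at (p + t *\<^sub>R w)) w"
proof (cases "w = 0 \<or> s = t")
  case True then show ?thesis using D_zero[OF sm] by auto
next
  case False
  then have "s < t" "w \<noteq> 0" using st by auto
  from MVT2[OF this(1) line_d2[OF sm]] obtain z where
    "frechet_derivative F (at (p + t *\<^sub>R w)) w - frechet_derivative F (at (p + s *\<^sub>R w)) w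
      = (t - s) * hess_form F (p + z *\<^sub>R w) w" by blast
  moreover have "hess_form F (p + z *\<^sub>R w) w > 0" using hp \<open>w \<noteq> 0\<close> by blast
  ultimately show ?thesis using \<open>s < t\<close> by (smt (verit) mult_pos_pos)
qed

lemma convex1:
  fixes F :: "'a::euclidean_space \<Rightarrow> real"
  assumes sm: "smooth_fun F"
    and hp: "\<And>x v. v \<noteq> 0 \<Longrightarrow> hess_form F x v > 0"
  shows "F q - F p \<ge> frechet_derivative F (at p) (q - p)"
proof -
  from MVT2[of 0 1, OF _ line_d1[OF sm, of p "q - p"]] obtain z where
    z: "0 < z" "z < 1" "F (p + 1 *\<^sub>R (q - p)) - F (p + 0 *\<^sub>R (q - p)) = (1 - 0) * frechet_derivative F (at (p + z *\<^sub>R (q - p))) (q - p)"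
    by auto
  have "frechet_derivative F (at (p + 0 *\<^sub>R (q - p))) (q - p) \<le> frechet_derivative F (at (p + z *\<^sub>R (q - p))) (q - p)"
    using z by (intro mono_deriv[OF sm hp]) auto
  with z show ?thesis by simp
qed

lemma strong:
  fixes F :: "'a::euclidean_space \<Rightarrow> real"
  assumes sm: "smooth_fun F"
    and lb: "\<forall>x\<in>cball 0 R. \<forall>v. hess_form F x v \<ge> l * (norm v)^2"
    and p: "p \<in> cball 0 R" and q: "q \<in> cball 0 R"
  shows "frechet_derivative F (at q) (q - p) - frechet_derivative F (at p) (q - p) \<ge> l * (norm (q - p))^2"
proof -
  from MVT2[of 0 1, OF _ line_d2[OF sm, of p "q - p"]] obtain z where
    z: "0 < z" "z < 1" "frechet_derivative F (at (p + 1 *\<^sub>R (q - p))) (q - p) - frechet_derivative F (at (p + 0 *\<^sub>R (q - p))) (q - p) = (1 - 0) * hess_form F (p + z *\<^sub>R (q - p)) (q - p)"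
    by auto
  have "p + z *\<^sub>R (q - p) = (1 - z) *\<^sub>R p + z *\<^sub>R q" by (simp add: algebra_simps)
  also have "\<dots> \<in> cball 0 R"
    using convex_cball[of "0::'a" R] p q z unfolding convex_def by auto
  finally have "hess_form F (p + z *\<^sub>R (q - p)) (q - p) \<ge> l * (norm (q - p))^2" using lb by blast
  with z show ?thesis by simp
qed


lemma grad_inner:
  fixes F :: "'a::euclidean_space \<Rightarrow> real"
  assumes sm: "smooth_fun F"
  shows "grad F p \<bullet> w = frechet_derivative F (at p) w"
proof -
  have "frechet_derivative F (at p) w = (\<Sum>b\<in>Basis. (w \<bullet> b) * frechet_derivative F (at p) b)"
    by (rule D_lin[OF sm])
  also have "\<dots> = grad F p \<bullet> w"
    unfolding grad_def by (simp add: inner_sum_left inner_sum_right inner_commute mult.commute)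
  finally show ?thesis by simp
qed

lemma grad_cont:
  fixes F :: "'a::euclidean_space \<Rightarrow> real"
  assumes sm: "smooth_fun F"
  shows "continuous_on S (grad F)"
  unfolding grad_def
  by (intro continuous_on_sum continuous_on_scaleR continuous_on_const sm_cont sm_D sm)

lemma lip:
  fixes F :: "'a::euclidean_space \<Rightarrow> real"
  assumes sm: "smooth_fun F"
    and hp: "\<And>x v. v \<noteq> 0 \<Longrightarrow> hess_form F x v > 0"
    and lb: "\<forall>x\<in>cball 0 R. \<forall>v. hess_form F x v \<ge> l * (norm v)^2"
    and p: "p \<in> cball 0 R" and q: "q \<in> cball 0 R"
    and Fp: "F p = c" and Fq: "F q = c"
    and gp: "grad F p \<noteq> 0" and gq: "grad F q \<noteq> 0"
    and Gp: "norm (grad F p) \<le> G" and Gq: "norm (grad F q) \<le> G"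
    and l: "l > 0"
  shows "l * norm (p - q) \<le> G * norm (gauss_map F p - gauss_map F q)"
proof -
  define w where "w = q - p"
  define A where "A = grad F q \<bullet> w"
  define B where "B = - (grad F p \<bullet> w)"
  have A0: "A \<ge> 0"
  proof -
    have "F p - F q \<ge> frechet_derivative F (at q) (p - q)" by (rule convex1[OF sm hp])
    moreover have "frechet_derivative F (at q) (p - q) = - A"
      unfolding A_def w_def grad_inner[OF sm, symmetric] by (simp add: inner_diff_right)
    ultimately show ?thesis using Fp Fq by simp
  qed
  have B0: "B \<ge> 0"
  proof -
    have "F q - F p \<ge> frechet_derivative F (at p) (q - p)" by (rule convex1[OF sm hp])
    moreover have "frechet_derivative F (at p) (q - p) = - B"
      unfolding B_def w_def grad_inner[OF sm, symmetric] by simp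
    ultimately show ?thesis using Fp Fq by simp
  qed
  have AB: "A + B \<ge> l * (norm w)^2"
    using strong[OF sm lb p q] unfolding A_def B_def w_def grad_inner[OF sm, symmetric] by simp
  have np: "norm (grad F p) > 0" and nq: "norm (grad F q) > 0" using gp gq by auto
  have G0: "G > 0" using np Gp by linarith
  have "(gauss_map F p - gauss_map F q) \<bullet> (p - q) = B / norm (grad F p) + A / norm (grad F q)"
    unfolding gauss_map_def A_def B_def w_def
    by (simp add: inner_diff_left inner_diff_right algebra_simps divide_inverse)
  also have "\<dots> \<ge> B / G + A / G"
    using divide_left_mono[OF Gp B0 mult_pos_pos[OF G0 np]] divide_left_mono[OF Gq A0 mult_pos_pos[OF G0 nq]]
    by linarith
  finally have "(A + B) / G \<le> (gauss_map F p - gauss_map F q) \<bullet> (p - q)" by (simp add: add_divide_distrib)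
  also have "\<dots> \<le> norm (gauss_map F p - gauss_map F q) * norm (p - q)"
    by (rule norm_cauchy_schwarz)
  finally have "l * (norm w)^2 \<le> G * (norm (gauss_map F p - gauss_map F q) * norm (p - q))"
    using AB G0 by (simp add: divide_le_eq mult.commute)
  moreover have "norm w = norm (p - q)" unfolding w_def by (simp add: norm_minus_commute)
  ultimately have "norm (p - q) * (l * norm (p - q)) \<le> norm (p - q) * (G * norm (gauss_map F p - gauss_map F q))"
    by (simp add: power2_eq_square mult_ac)
  then show ?thesis
    by (cases "norm (p - q) = 0") (auto simp: l G0)
qed


lemma exist:
  fixes F :: "'a::euclidean_space \<Rightarrow> real"
  assumes sm: "smooth_fun F"
    and hp: "\<And>x v. v \<noteq> 0 \<Longrightarrow> hess_form F x v > 0"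
    and Mc: "compact {x. F x = c}"
    and bd: "bounded {x. F x < c}"
    and F0: "F 0 < c"
    and u: "norm u = 1"
  shows "\<exists>p. F p = c \<and> grad F p \<noteq> 0 \<and> gauss_map F p = u"
proof -
  let ?K = "{x. F x \<le> c}"
  have "?K = {x. F x < c} \<union> {x. F x = c}" by auto
  then have "bounded ?K" using bd compact_imp_bounded[OF Mc] by (simp add: bounded_Un)
  moreover have "closed ?K"
    by (intro closed_Collect_le sm_cont sm continuous_on_const)
  ultimately have cK: "compact ?K" by (simp add: compact_eq_bounded_closed)
  have "?K \<noteq> {}" using F0 by (auto intro!: exI[of _ 0])
  then obtain p where pK: "p \<in> ?K" and pmax: "\<forall>y\<in>?K. u \<bullet> y \<le> u \<bullet> p"
    using continuous_attains_sup[OF cK _ continuous_on_inner[OF continuous_on_const continuous_on_id]]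
    by blast
  have noimp: "u \<bullet> w \<le> 0" if "t > 0" "F (p + t *\<^sub>R w) \<le> c" for w t
  proof -
    have "u \<bullet> (p + t *\<^sub>R w) \<le> u \<bullet> p" using pmax that by auto
    then have "t * (u \<bullet> w) \<le> 0" by (simp add: inner_add_right)
    with that show ?thesis by (simp add: mult_le_0_iff)
  qed
  have uu: "u \<bullet> u = 1" using u by (simp add: power2_norm_eq_inner[symmetric])
  have Fp: "F p = c"
  proof (rule ccontr)
    assume "F p \<noteq> c"
    then have lt: "F p < c" using pK by auto
    have "isCont (\<lambda>t. F (p + t *\<^sub>R u)) 0" by (rule DERIV_isCont[OF line_d1[OF sm]])
    then have "((\<lambda>t. F (p + t *\<^sub>R u)) \<longlongrightarrow> F p) (at 0)" by (simp add: isCont_def)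
    from order_tendstoD(2)[OF this lt] obtain d where d: "d > 0"
      and dd: "\<forall>t. t \<noteq> 0 \<and> dist t 0 < d \<longrightarrow> F (p + t *\<^sub>R u) < c"
      unfolding eventually_at by auto
    have "F (p + (d/2) *\<^sub>R u) < c" using dd d by auto
    then have "u \<bullet> u \<le> 0" using noimp[of "d/2" u] d by auto
    with uu show False by simp
  qed
  define g where "g = grad F p"
  have g0: "g \<noteq> 0"
  proof
    assume "g = 0"
    have "F 0 - F p \<ge> frechet_derivative F (at p) (0 - p)" by (rule convex1[OF sm hp])
    also have "frechet_derivative F (at p) (0 - p) = 0"
      using \<open>g = 0\<close> unfolding g_def grad_inner[OF sm, symmetric] by simp
    finally show False using F0 Fp by simp
  qed
  have "gauss_map F p = u"
  proof (rule ccontr)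
    assume ne: "gauss_map F p \<noteq> u"
    define e where "e = g /\<^sub>R norm g"
    have ee: "e \<bullet> e = 1" using g0 unfolding e_def by (simp add: power2_norm_eq_inner[symmetric])
    have "e \<noteq> u" using ne unfolding e_def g_def gauss_map_def by auto
    then have "(u - e) \<bullet> (u - e) > 0" by simp
    then have ue: "u \<bullet> e < 1" using uu ee by (simp add: inner_diff_left inner_diff_right inner_commute)
    define w where "w = u - e"
    have uw: "u \<bullet> w > 0" unfolding w_def using uu ue by (simp add: inner_diff_right)
    have "g = norm g *\<^sub>R e" unfolding e_def using g0 by simp
    then have "g \<bullet> w = norm g * (e \<bullet> w)" by (metis inner_scaleR_left)
    moreover have "e \<bullet> w < 0" unfolding w_def using ee ue by (simp add: inner_diff_right inner_commute)
    moreover have "norm g > 0" using g0 by simp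
    ultimately have gw: "g \<bullet> w < 0" by (simp add: mult_pos_neg)
    have "((\<lambda>t. F (p + t *\<^sub>R w)) has_real_derivative g \<bullet> w) (at 0)"
      using line_d1[OF sm, of p w 0] unfolding g_def grad_inner[OF sm] by simp
    from DERIV_neg_dec_right[OF this gw] obtain d where d: "d > 0"
      and dd: "\<forall>h>0. h < d \<longrightarrow> F (p + 0 *\<^sub>R w) > F (p + (0 + h) *\<^sub>R w)" by blast
    have "F (p + (d/2) *\<^sub>R w) < c" using dd d Fp by auto
    then have "u \<bullet> w \<le> 0" using noimp[of "d/2" w] d by auto
    with uw show False by simp
  qed
  with Fp g0 show ?thesis unfolding g_def by blast
qed


lemma cJ_norm: "norm (cJ x) = norm x"
  unfolding cJ_def norm_vec_def by (simp add: norm_mult)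

lemma cJ_diff: "cJ x - cJ y = cJ (x - y)"
  unfolding cJ_def by (simp add: vec_eq_iff algebra_simps)

lemma cJ_scale: "cJ (r *\<^sub>R x) = r *\<^sub>R cJ x"
  unfolding cJ_def by (simp add: vec_eq_iff scaleR_conv_of_real)

lemma nx_lip:
  fixes x y :: "'a::real_normed_vector"
  assumes "x \<noteq> 0" "y \<noteq> 0"
  shows "norm (y /\<^sub>R norm y - x /\<^sub>R norm x) \<le> 2 * norm (y - x) / norm x"
proof -
  have e: "y /\<^sub>R norm y - x /\<^sub>R norm x = (y - x) /\<^sub>R norm x + (inverse (norm y) - inverse (norm x)) *\<^sub>R y"
    by (simp add: algebra_simps)
  have "norm ((inverse (norm y) - inverse (norm x)) *\<^sub>R y) = \<bar>norm x - norm y\<bar> / norm x"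
    using assms by (simp add: field_simps abs_minus_commute)
  also have "\<dots> \<le> norm (y - x) / norm x"
    using assms by (intro divide_right_mono) (auto simp: norm_triangle_ineq3 norm_minus_commute)
  moreover have "norm ((y - x) /\<^sub>R norm x) = norm (y - x) / norm x" by (simp add: divide_inverse mult.commute)
  ultimately have "norm (y /\<^sub>R norm y - x /\<^sub>R norm x) \<le> norm (y - x) / norm x + norm (y - x) / norm x"
    unfolding e using norm_triangle_ineq[of "(y - x) /\<^sub>R norm x" "(inverse (norm y) - inverse (norm x)) *\<^sub>R y"]
    by linarith
  then show ?thesis by simp
qed


theorem lemma3p3:
  fixes F :: "complex^'d \<Rightarrow> real" and c :: real
    and \<phi> :: "real \<Rightarrow> complex^'d \<Rightarrow> complex^'d"
  assumes smooth: "smooth_fun F"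
    and hess_pos: "\<And>x v. v \<noteq> 0 \<Longrightarrow> hess_form F x v > 0"
    and M_compact: "compact {x. F x = c}"
    and dom_bounded: "bounded {x. F x < c}"
    and origin_inside: "F 0 < c"
    and flow: "\<And>x. x \<noteq> 0 \<Longrightarrow> \<phi> 0 x = x \<and>
        (\<forall>t. \<phi> t x \<noteq> 0 \<and>
             ((\<lambda>s. \<phi> s x) has_vector_derivative Vfield F c (\<phi> t x)) (at t))"
  shows "\<exists>C \<delta>. C > 0 \<and> \<delta> > 0 \<and>
           (\<forall>x. norm x \<ge> 1 / \<delta> \<longrightarrow>
                norm (\<phi> 1 x - x - Vfield F c x) \<le> C / norm x)"
proof -
  let ?M = "{x. F x = c}"
  obtain R where R: "R > 0" "\<forall>x\<in>?M. norm x \<le> R"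
    using compact_imp_bounded[OF M_compact] unfolding bounded_pos by blast
  have "compact (grad F ` ?M)" by (intro compact_continuous_image grad_cont smooth M_compact)
  then have "bounded (grad F ` ?M)" by (rule compact_imp_bounded)
  then obtain G where G: "G > 0" "\<forall>y\<in>grad F ` ?M. norm y \<le> G"
    unfolding bounded_pos by blast
  obtain l where l: "l > 0" "\<forall>x\<in>cball 0 R. \<forall>v. hess_form F x v \<ge> l * (norm v)^2"
    using lam_exists[OF smooth hess_pos] by blast
  define K where "K = G / l"
  have K0: "K > 0" using G l unfolding K_def by simp
  define gi where "gi = gauss_inv F c"
  have lipM: "l * norm (p - q) \<le> G * norm (gauss_map F p - gauss_map F q)"
    if "F p = c" "F q = c" "grad F p \<noteq> 0" "grad F q \<noteq> 0" for p q
    using that R G l(1) by (intro lip[OF smooth hess_pos l(2)]) auto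
  have gi: "F (gi a) = c \<and> gauss_map F (gi a) = a \<and> grad F (gi a) \<noteq> 0" if a: "norm a = 1" for a
  proof -
    obtain p where p: "F p = c" "grad F p \<noteq> 0" "gauss_map F p = a"
      using exist[OF smooth hess_pos M_compact dom_bounded origin_inside a] by blast
    have uniq: "q = p" if Fq: "F q = c" and gq: "gauss_map F q = a" for q
    proof -
      have gq0: "grad F q \<noteq> 0"
      proof
        assume "grad F q = 0"
        then have "gauss_map F q = 0" by (simp add: gauss_map_def)
        with gq a show False by simp
      qed
      have "l * norm (q - p) \<le> G * norm (gauss_map F q - gauss_map F p)"
        by (rule lipM[OF Fq p(1) gq0 p(2)])
      then have "l * norm (q - p) \<le> 0" using gq p(3) by simp
      with l(1) show ?thesis by (simp add: mult_le_0_iff)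
    qed
    have "gi a = p" unfolding gi_def gauss_inv_def
      apply (rule the_equality)
      using p apply simp
      using uniq apply blast
      done
    with p show ?thesis by simp
  qed
  have gi_lip: "norm (gi a - gi b) \<le> K * norm (a - b)" if "norm a = 1" "norm b = 1" for a b
  proof -
    have "l * norm (gi a - gi b) \<le> G * norm (a - b)"
      using lipM[of "gi a" "gi b"] gi[OF that(1)] gi[OF that(2)] by simp
    then show ?thesis unfolding K_def using l by (simp add: field_simps mult.commute)
  qed
  have gi_bd: "norm (gi a) \<le> R" if "norm a = 1" for a
    using gi[OF that] R by auto
  have unitJ: "norm (cJ x /\<^sub>R norm x) = 1" "norm (- (cJ x /\<^sub>R norm x)) = 1" if "x \<noteq> 0" for x :: "complex^'d"
    using that by (simp_all add: cJ_norm)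
  have Vbd: "norm (Vfield F c y) \<le> 4 * R" if "y \<noteq> 0" for y
  proof -
    have "norm (Vfield F c y) \<le> 2 * (norm (n_plus F c y) + norm (n_minus F c y))"
      unfolding Vfield_def using norm_triangle_ineq4[of "n_plus F c y" "n_minus F c y"] by simp
    also have "\<dots> \<le> 2 * (R + R)"
      unfolding n_plus_def n_minus_def gi_def[symmetric]
      using gi_bd unitJ[OF that] by (intro mult_left_mono add_mono) auto
    finally show ?thesis by simp
  qed
  have Vlip: "norm (Vfield F c y - Vfield F c x) \<le> 8 * K * norm (y - x) / norm x"
    if "x \<noteq> 0" "y \<noteq> 0" for x y
  proof -
    have cd: "norm (cJ y /\<^sub>R norm y - cJ x /\<^sub>R norm x) = norm (y /\<^sub>R norm y - x /\<^sub>R norm x)"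
      by (simp add: cJ_scale[symmetric] cJ_diff cJ_norm)
    have "Vfield F c y - Vfield F c x = 2 *\<^sub>R ((gi (- (cJ y /\<^sub>R norm y)) - gi (- (cJ x /\<^sub>R norm x)))
        - (gi (cJ y /\<^sub>R norm y) - gi (cJ x /\<^sub>R norm x)))"
      unfolding Vfield_def n_plus_def n_minus_def gi_def by (simp add: algebra_simps)
    then have "norm (Vfield F c y - Vfield F c x) \<le> 2 * (norm (gi (- (cJ y /\<^sub>R norm y)) - gi (- (cJ x /\<^sub>R norm x)))
        + norm (gi (cJ y /\<^sub>R norm y) - gi (cJ x /\<^sub>R norm x)))"
      using norm_triangle_ineq4[of "gi (- (cJ y /\<^sub>R norm y)) - gi (- (cJ x /\<^sub>R norm x))" "gi (cJ y /\<^sub>R norm y) - gi (cJ x /\<^sub>R norm x)"]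
      by simp
    also have "\<dots> \<le> 2 * (K * norm (y /\<^sub>R norm y - x /\<^sub>R norm x) + K * norm (y /\<^sub>R norm y - x /\<^sub>R norm x))"
      using gi_lip[OF unitJ(2)[OF that(2)] unitJ(2)[OF that(1)]] gi_lip[OF unitJ(1)[OF that(2)] unitJ(1)[OF that(1)]] cd
      using norm_minus_commute[of "cJ x /\<^sub>R norm x" "cJ y /\<^sub>R norm y"] by simp
    also have "\<dots> = 4 * K * norm (y /\<^sub>R norm y - x /\<^sub>R norm x)" by simp
    also have "\<dots> \<le> 4 * K * (2 * norm (y - x) / norm x)"
      using nx_lip[OF that] K0 by (intro mult_left_mono) auto
    finally show ?thesis by simp
  qed
  define C where "C = 96 * K * R + 1"
  have C0: "C > 0" unfolding C_def using K0 R by (simp add: add_pos_nonneg)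
  have main: "norm (\<phi> 1 x - x - Vfield F c x) \<le> C / norm x" if x: "norm x \<ge> 1" for x
  proof -
    have x0: "x \<noteq> 0" using x by auto
    note fl = flow[OF x0]
    have der: "((\<lambda>s. \<phi> s x) has_vector_derivative Vfield F c (\<phi> t x)) (at t within {0..1})" for t
      using fl has_vector_derivative_at_within by blast
    have near: "norm (\<phi> s x - x) \<le> 12 * R" if s: "s \<in> {0..1}" for s
    proof -
      have "norm (\<phi> s x - \<phi> 0 x - (s - 0) *\<^sub>R Vfield F c (\<phi> 0 x)) \<le> norm (s - 0) * (8 * R)"
      proof (rule vector_differentiable_bound_linearization[OF der])
        show "closed_segment 0 s \<subseteq> {0..1}" using s by (simp add: closed_segment_eq_real_ivl)
        show "0 \<in> {0..1::real}" by simp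
        fix t assume "t \<in> {0..1::real}"
        have "norm (Vfield F c (\<phi> t x) - Vfield F c (\<phi> 0 x)) \<le> norm (Vfield F c (\<phi> t x)) + norm (Vfield F c (\<phi> 0 x))"
          by (rule norm_triangle_ineq4)
        also have "\<dots> \<le> 4 * R + 4 * R" using Vbd fl x0 by (intro add_mono) auto
        finally show "norm (Vfield F c (\<phi> t x) - Vfield F c (\<phi> 0 x)) \<le> 8 * R" by simp
      qed
      then have "norm (\<phi> s x - x - s *\<^sub>R Vfield F c x) \<le> s * (8 * R)" using fl s by simp
      moreover have "norm (s *\<^sub>R Vfield F c x) \<le> 4 * R"
        using Vbd[OF x0] s R by (simp add: mult_le_one) (smt (verit) mult_left_le_one_le norm_ge_zero)
      moreover have "s * (8 * R) \<le> 8 * R" using s R by (simp add: mult_le_cancel_right1)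
      ultimately show ?thesis using norm_triangle_ineq[of "\<phi> s x - x - s *\<^sub>R Vfield F c x" "s *\<^sub>R Vfield F c x"]
        by simp
    qed
    have "norm (\<phi> 1 x - \<phi> 0 x - (1 - 0) *\<^sub>R Vfield F c (\<phi> 0 x)) \<le> norm (1 - 0::real) * (96 * K * R / norm x)"
    proof (rule vector_differentiable_bound_linearization[OF der])
      show "closed_segment 0 1 \<subseteq> {0..1::real}" by (simp add: closed_segment_eq_real_ivl)
      show "0 \<in> {0..1::real}" by simp
      fix t assume t: "t \<in> {0..1::real}"
      have "norm (Vfield F c (\<phi> t x) - Vfield F c x) \<le> 8 * K * norm (\<phi> t x - x) / norm x"
        using Vlip[OF x0] fl by blast
      also have "\<dots> \<le> 8 * K * (12 * R) / norm x"
        using near[OF t] K0 x0 by (intro divide_right_mono mult_left_mono) auto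
      finally show "norm (Vfield F c (\<phi> t x) - Vfield F c (\<phi> 0 x)) \<le> 96 * K * R / norm x" using fl by simp
    qed
    then have "norm (\<phi> 1 x - x - Vfield F c x) \<le> 96 * K * R / norm x" using fl by simp
    also have "\<dots> \<le> C / norm x" unfolding C_def using x0 by (intro divide_right_mono) auto
    finally show ?thesis .
  qed
  show ?thesis
    by (rule exI[of _ C], rule exI[of _ 1]) (use C0 main in auto)
qed

end
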